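(* Consider the following two methods for minimizing a finite sum $F(\mathbf{w})=\frac1n\sum_{i=1}^n f_i(\mathbf{w})$, both using the naive empirical gradient estimator $\widehat{\nabla F}(\mathbf{w})=\frac1m\sum_{j=1}^m g_j(\mathbf{w})$, where $m\in\mathbb{N}$ is fixed and $g_1(\mathbf{w}),\dots,g_m(\mathbf{w})$ are obtained from $m$ stochastic first-order oracle calls at $\mathbf{w}$, i.e. each $g_j(\mathbf{w})=\nabla f_{i_j}(\mathbf{w})$ with $i_1,\dots,i_m$ i.i.d. uniform on $[n]$ (fresh samples at each use): (i) SGD with constant stepsize $\eta$: $\mathbf{w}_{k+1}=\mathbf{w}_k-\eta\,\widehat{\nabla F}(\mathbf{w}_k)$; (ii) SVRG with constant stepsize $\eta$ and inner-loop length $T$, in which at each outer iteration with reference point $\tilde{\mathbf{w}}$ one sets $\tilde{\boldsymbol\mu}=\widehat{\nabla F}(\tilde{\mathbf{w}})$, $\mathbf{w}_0=\tilde{\mathbf{w}}$, $\mathbf{w}_t=\mathbf{w}_{t-1}-\eta(\nabla f_{i_t}(\mathbf{w}_{t-1})-\nabla f_{i_t}(\tilde{\mathbf{w}})+\tilde{\boldsymbol\mu})$ for $t=1,\dots,T$ with $i_t$ i.i.d. uniform on $[n]$, and the next reference point is $\frac1T\sum_{t=1}^T\mathbf{w}_t$. Then: (a) (Lower bound in expectation) There exists $F\in\Sigma^1_1$ such that, for all sufficiently small $\epsilon>0$, for any choice of $m$ and stepsize $\eta$, the number of stochastic oracle calls needed by either method to output a point $\mathbf{w}$ with $\mathbb{E}[F(\mathbf{w})-F(\mathbf{w}^*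 )]\le\epsilon$ is at least $\Omega(1/\epsilon)$. (b) (Lower bound in high probability) There exists $F\in\Sigma^1_1$ such that, for all sufficiently small $\epsilon>0$ and $\delta>0$, for any choice of $m\ge 2$ and stepsize $\eta$, the number of stochastic oracle calls needed by either method to output a point $\mathbf{w}$ with $F(\mathbf{w})-F(\mathbf{w}^* )\le\epsilon$ with probability at least $1-\delta$ is at least $\Omega(1/\sqrt{\epsilon})$. (The witness used is, for even $n$, the one-dimensional function $F(w)=\frac1n\big(\frac n4(w-1)^2+\frac n4(w+1)^2\big)=\frac12(w^2+1)$, where $n/2$ of the $f_i$ equal $\frac12(w-1)^2$ and the other $n/2$ equal $\frac12(w+1)^2$, with a fixed initialization $w_0$ with $F(w_0)-F^*=\Delta>0$.)
   Context: $\Sigma^L_\mu$ denotes the class of finite sums $F=\frac1n\sum_{i=1}^n f_i$ on $\mathbb{R}^d$ in which every $f_i$ is $L$-smooth (i.e. $f_i(\mathbf{u})\le f_i(\mathbf{w})+\langle\nabla f_i(\mathbf{w}),\mathbf{u}-\mathbf{w}\rangle+\frac L2\|\mathbf{u}-\mathbf{w}\|^2$) and $\mu$-strongly convex (i.e. $f_i(\mathbf{u})\ge f_i(\mathbf{w})+\langle\nabla f_i(\mathbf{w}),\mathbf{u}-\mathbf{w}\rangle+\frac\mu2\|\mathbf{u}-\mathbf{w}\|^2$) for all $\mathbf{u},\mathbf{w}$. $\mathbf{w}^*$ is the minimizer of $F$. A stochastic first-order oracle call returns $(f_i(\mathbf{w}),\nabla f_i(\mathbf{w}))$ (possibly at several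 points simultaneously, for the same $i$) for an index $i\sim\mathrm{Unif}([n])$ drawn independently at each call and not revealed. The oracle-call count includes all calls made (estimator calls and, for SVRG, inner-loop calls). *)

theory Defs
  imports "HOL-Analysis.Analysis" "HOL-Probability.Probability_Mass_Function"
begin

definition Fsum :: "nat \<Rightarrow> (nat \<Rightarrow> 'a \<Rightarrow> real) \<Rightarrow> 'a \<Rightarrow> real" where
  "Fsum n f w = (\<Sum>i<n. f i w) / real n"

definition gap :: "nat \<Rightarrow> (nat \<Rightarrow> 'a \<Rightarrow> real) \<Rightarrow> 'a \<Rightarrow> real" where
  "gap n f w = Fsum n f w - (INF v. Fsum n f v)"

definition in_Sigma :: "real \<Rightarrow> real \<Rightarrow> nat \<Rightarrow> (nat \<Rightarrow> 'a::real_inner \<Rightarrow> real)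
    \<Rightarrow> (nat \<Rightarrow> 'a \<Rightarrow> 'a) \<Rightarrow> bool" where
  "in_Sigma L \<mu> n f g \<longleftrightarrow> 0 < n \<and> (\<forall>i<n.
     (\<forall>w. (f i has_derivative (\<lambda>h. g i w \<bullet> h)) (at w)) \<and>
     (\<forall>u w. f i u \<le> f i w + g i w \<bullet> (u - w) + L / 2 * (norm (u - w))\<^sup>2) \<and>
     (\<forall>u w. f i u \<ge> f i w + g i w \<bullet> (u - w) + \<mu> / 2 * (norm (u - w))\<^sup>2))"

definition idx :: "nat \<Rightarrow> nat pmf" where
  "idx n = pmf_of_set {..<n}"

primrec est_sum :: "nat \<Rightarrow> (nat \<Rightarrow> 'a \<Rightarrow> 'a::real_vector) \<Rightarrow> nat \<Rightarrow> 'a \<Rightarrow> 'a pmf" where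
  "est_sum n g 0 w = return_pmf 0"
| "est_sum n g (Suc m) w =
     bind_pmf (idx n) (\<lambda>i. map_pmf (\<lambda>s. g i w + s) (est_sum n g m w))"

definition est :: "nat \<Rightarrow> (nat \<Rightarrow> 'a \<Rightarrow> 'a::real_vector) \<Rightarrow> nat \<Rightarrow> 'a \<Rightarrow> 'a pmf" where
  "est n g m w = map_pmf (\<lambda>s. (1 / real m) *\<^sub>R s) (est_sum n g m w)"

text \<open>SGD: distribution of w_k after k iterations (k*m oracle calls).\<close>
primrec sgd :: "nat \<Rightarrow> (nat \<Rightarrow> 'a \<Rightarrow> 'a::real_vector) \<Rightarrow> nat \<Rightarrow> real \<Rightarrow> 'a \<Rightarrow> nat \<Rightarrow> 'a pmf" where
  "sgd n g m \<eta> w0 0 = return_pmf w0"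
| "sgd n g m \<eta> w0 (Suc k) =
     bind_pmf (sgd n g m \<eta> w0 k) (\<lambda>w. map_pmf (\<lambda>G. w - \<eta> *\<^sub>R G) (est n g m w))"

text \<open>SVRG inner loop: returns (w_t, w_1 + ... + w_t).\<close>
primrec svrg_inner :: "nat \<Rightarrow> (nat \<Rightarrow> 'a \<Rightarrow> 'a::real_vector) \<Rightarrow> real \<Rightarrow> 'a \<Rightarrow> 'a \<Rightarrow> nat
    \<Rightarrow> ('a \<times> 'a) pmf" where
  "svrg_inner n g \<eta> wt mu 0 = return_pmf (wt, 0)"
| "svrg_inner n g \<eta> wt mu (Suc t) =
     bind_pmf (svrg_inner n g \<eta> wt mu t) (\<lambda>(w, s).
       map_pmf (\<lambda>i. let w' = w - \<eta> *\<^sub>R (g i w - g i wt + mu) in (w', s + w')) (idx n))"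

text \<open>One SVRG outer iteration from reference point wt (m + T oracle calls).\<close>
definition svrg_epoch :: "nat \<Rightarrow> (nat \<Rightarrow> 'a \<Rightarrow> 'a::real_vector) \<Rightarrow> nat \<Rightarrow> real \<Rightarrow> nat \<Rightarrow> 'a \<Rightarrow> 'a pmf" where
  "svrg_epoch n g m \<eta> T wt =
     bind_pmf (est n g m wt) (\<lambda>mu.
       map_pmf (\<lambda>(w, s). (1 / real T) *\<^sub>R s) (svrg_inner n g \<eta> wt mu T))"

primrec svrg :: "nat \<Rightarrow> (nat \<Rightarrow> 'a \<Rightarrow> 'a::real_vector) \<Rightarrow> nat \<Rightarrow> real \<Rightarrow> nat \<Rightarrow> 'a \<Rightarrow> nat \<Rightarrow> 'a pmf" where
  "svrg n g m \<eta> T w0 0 = return_pmf w0"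
| "svrg n g m \<eta> T w0 (Suc S) = bind_pmf (svrg n g m \<eta> T w0 S) (svrg_epoch n g m \<eta> T)"

end

theory Submission
  imports Defs
begin

definition e0 :: "'a::euclidean_space" where "e0 = (SOME b. b \<in> Basis)"

lemma e0_Basis: "(e0::'a::euclidean_space) \<in> Basis"
  unfolding e0_def by (rule someI_ex) (use nonempty_Basis in blast)

lemma e0_inner: "(e0::'a::euclidean_space) \<bullet> e0 = 1"
  using inner_Basis[OF e0_Basis e0_Basis] by simp

definition av :: "nat \<Rightarrow> 'a::euclidean_space" where "av i = (if even i then e0 else - e0)"

lemma sum_even_odd: "(\<Sum>i<2*j. (if even i then x else y)) = real j * (x + y)"
  by (induction j) (auto simp: algebra_simps)

lemma sum_av:
  fixes \<phi> :: "'a::euclidean_space \<Rightarrow> real"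
  assumes "even n"
  shows "(\<Sum>i<n. \<phi> (av i)) = real (n div 2) * (\<phi> e0 + \<phi> (- e0))"
proof -
  obtain j where n: "n = 2*j" using assms by blast
  have "(\<Sum>i<n. \<phi> (av i)) = (\<Sum>i<2*j. (if even i then \<phi> e0 else \<phi> (-e0)))"
    unfolding n av_def by (intro sum.cong) auto
  also have "\<dots> = real j * (\<phi> e0 + \<phi> (- e0))" by (rule sum_even_odd)
  finally show ?thesis using n by simp
qed

lemma set_idx: "n > 0 \<Longrightarrow> set_pmf (idx n) = {..<n}"
  unfolding idx_def by (subst set_pmf_of_set) auto

lemma E_idx:
  fixes \<phi> :: "'a::euclidean_space \<Rightarrow> real"
  assumes "even n" "n > 0"
  shows "measure_pmf.expectation (idx n) (\<lambda>i. \<phi> (av i)) = (\<phi> e0 + \<phi> (- e0)) / 2"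
proof -
  obtain j where n: "n = 2*j" using assms by blast
  have "measure_pmf.expectation (idx n) (\<lambda>i. \<phi> (av i)) = (\<Sum>i<n. \<phi> (av i)) / real n"
    unfolding idx_def using assms by (subst integral_pmf_of_set) auto
  also have "\<dots> = (\<phi> e0 + \<phi> (- e0)) / 2"
    using assms n by (simp add: sum_av)
  finally show ?thesis .
qed

lemma E_bind:
  assumes fp: "finite (set_pmf p)" and ff: "\<And>x. x \<in> set_pmf p \<Longrightarrow> finite (set_pmf (f x))"
  fixes h :: "_ \<Rightarrow> real"
  shows "measure_pmf.expectation (bind_pmf p f) h
       = measure_pmf.expectation p (\<lambda>x. measure_pmf.expectation (f x) h)"
proof -
  let ?B = "set_pmf (bind_pmf p f)"
  have fB: "finite ?B" using assms by simp
  have "measure_pmf.expectation (bind_pmf p f) h = (\<Sum>y\<in>?B. h y * pmf (bind_pmf p f) y)"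
    by (rule integral_measure_pmf_real) (use fB in auto)
  also have "\<dots> = (\<Sum>y\<in>?B. h y * (\<Sum>x\<in>set_pmf p. pmf (f x) y * pmf p x))"
  proof (intro sum.cong refl)
    fix y
    have "pmf (bind_pmf p f) y = (\<integral>x. pmf (f x) y \<partial>measure_pmf p)" by (rule pmf_bind)
    also have "\<dots> = (\<Sum>x\<in>set_pmf p. pmf (f x) y * pmf p x)"
      by (rule integral_measure_pmf_real) (use fp in auto)
    finally show "h y * pmf (bind_pmf p f) y = h y * (\<Sum>x\<in>set_pmf p. pmf (f x) y * pmf p x)" by simp
  qed
  also have "\<dots> = (\<Sum>x\<in>set_pmf p. (\<Sum>y\<in>?B. h y * pmf (f x) y) * pmf p x)"
    by (simp add: sum_distrib_left sum_distrib_right mult.assoc mult.left_commute, rule sum.swap)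
  also have "\<dots> = (\<Sum>x\<in>set_pmf p. measure_pmf.expectation (f x) h * pmf p x)"
  proof (intro sum.cong refl)
    fix x assume x: "x \<in> set_pmf p"
    have "measure_pmf.expectation (f x) h = (\<Sum>y\<in>?B. h y * pmf (f x) y)"
      by (rule integral_measure_pmf_real) (use fB x in auto)
    then show "(\<Sum>y\<in>?B. h y * pmf (f x) y) * pmf p x = measure_pmf.expectation (f x) h * pmf p x" by simp
  qed
  also have "\<dots> = measure_pmf.expectation p (\<lambda>x. measure_pmf.expectation (f x) h)"
    by (rule integral_measure_pmf_real[symmetric]) (use fp in auto)
  finally show ?thesis .
qed

definition gg :: "nat \<Rightarrow> 'a \<Rightarrow> 'a::euclidean_space" where "gg i w = w - av i"

lemma fin_est_sum: "n > 0 \<Longrightarrow> finite (set_pmf (est_sum n gg m w))"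
  by (induction m) (auto simp: set_idx)

lemma fin_est: "n > 0 \<Longrightarrow> finite (set_pmf (est n gg m w))"
  unfolding est_def by (simp add: fin_est_sum)

lemma E_add:
  fixes f g :: "_ \<Rightarrow> real"
  assumes "finite (set_pmf M)"
  shows "measure_pmf.expectation M (\<lambda>x. f x + g x) = measure_pmf.expectation M f + measure_pmf.expectation M g"
  by (rule Bochner_Integration.integral_add) (use assms integrable_measure_pmf_finite in auto)

lemma E_lin:
  fixes f g :: "_ \<Rightarrow> real"
  assumes "finite (set_pmf M)"
  shows "measure_pmf.expectation M (\<lambda>x. a + b * f x + c * g x) =
     a + b * measure_pmf.expectation M f + c * measure_pmf.expectation M g"
proof -
  have i: "integrable M f" "integrable M g" using assms integrable_measure_pmf_finite by auto
  have "measure_pmf.expectation M (\<lambda>x. a + b * f x + c * g x)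
      = measure_pmf.expectation M (\<lambda>x. a + b * f x) + measure_pmf.expectation M (\<lambda>x. c * g x)"
    by (rule E_add[OF assms])
  also have "measure_pmf.expectation M (\<lambda>x. a + b * f x) = a + measure_pmf.expectation M (\<lambda>x. b * f x)"
    by (subst E_add[OF assms]) simp
  finally show ?thesis by simp
qed

lemma L1:
  assumes "even n" "n > 0"
  shows "measure_pmf.expectation (est_sum n gg m w) (\<lambda>S. v \<bullet> S) = real m * (v \<bullet> (w::'a::euclidean_space))"
proof (induction m)
  case 0 then show ?case by simp
next
  case (Suc m)
  have "measure_pmf.expectation (est_sum n gg (Suc m) w) (\<lambda>S. v \<bullet> S)
      = measure_pmf.expectation (idx n) (\<lambda>i. measure_pmf.expectation (est_sum n gg m w) (\<lambda>s. v \<bullet> (gg i w + s)))"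
    by (simp, subst E_bind) (auto simp: set_idx fin_est_sum assms)
  also have "\<dots> = measure_pmf.expectation (idx n) (\<lambda>i. (\<lambda>a. v \<bullet> (w - a) + real m * (v \<bullet> w)) (av i))"
  proof (intro Bochner_Integration.integral_cong refl)
    fix i
    have "measure_pmf.expectation (est_sum n gg m w) (\<lambda>s. v \<bullet> (gg i w + s))
       = measure_pmf.expectation (est_sum n gg m w) (\<lambda>s. v \<bullet> gg i w + 1 * (v \<bullet> s) + 0 * (v \<bullet> s))"
      by (simp add: inner_add_right)
    also have "\<dots> = v \<bullet> gg i w + real m * (v \<bullet> w)"
      by (subst E_lin) (simp_all add: fin_est_sum assms Suc)
    finally show "measure_pmf.expectation (est_sum n gg m w) (\<lambda>s. v \<bullet> (gg i w + s)) =
      (\<lambda>a. v \<bullet> (w - a) + real m * (v \<bullet> w)) (av i)" by (simp add: gg_def)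
  qed
  also have "\<dots> = real (Suc m) * (v \<bullet> w)"
    by (subst E_idx[OF assms]) (simp add: inner_diff_right algebra_simps)
  finally show ?case .
qed

lemma L2:
  assumes "even n" "n > 0"
  shows "measure_pmf.expectation (est_sum n gg m w) (\<lambda>S. S \<bullet> S) = (real m)^2 * (w \<bullet> (w::'a::euclidean_space)) + real m"
proof (induction m)
  case 0 then show ?case by simp
next
  case (Suc m)
  have "measure_pmf.expectation (est_sum n gg (Suc m) w) (\<lambda>S. S \<bullet> S)
      = measure_pmf.expectation (idx n) (\<lambda>i. measure_pmf.expectation (est_sum n gg m w) (\<lambda>s. (gg i w + s) \<bullet> (gg i w + s)))"
    by (simp, subst E_bind) (auto simp: set_idx fin_est_sum assms)
  also have "\<dots> = measure_pmf.expectation (idx n) (\<lambda>i. (\<lambda>a. (w - a) \<bullet> (w - a) + 2 * real m * ((w - a) \<bullet> w)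
          + (real m)^2 * (w \<bullet> w) + real m) (av i))"
  proof (intro Bochner_Integration.integral_cong refl)
    fix i
    have "measure_pmf.expectation (est_sum n gg m w) (\<lambda>s. (gg i w + s) \<bullet> (gg i w + s))
       = measure_pmf.expectation (est_sum n gg m w) (\<lambda>s. gg i w \<bullet> gg i w + 2 * (gg i w \<bullet> s) + 1 * (s \<bullet> s))"
      by (rule Bochner_Integration.integral_cong[OF refl]) (simp add: inner_add_right inner_add_left inner_commute algebra_simps)
    also have "\<dots> = gg i w \<bullet> gg i w + 2 * (real m * (gg i w \<bullet> w)) + ((real m)^2 * (w \<bullet> w) + real m)"
      by (subst E_lin) (simp_all add: fin_est_sum assms Suc L1)
    finally show "measure_pmf.expectation (est_sum n gg m w) (\<lambda>s. (gg i w + s) \<bullet> (gg i w + s)) =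
      (\<lambda>a. (w - a) \<bullet> (w - a) + 2 * real m * ((w - a) \<bullet> w)
          + (real m)^2 * (w \<bullet> w) + real m) (av i)" by (simp add: gg_def)
  qed
  also have "\<dots> = (real (Suc m))^2 * (w \<bullet> w) + real (Suc m)"
    by (subst E_idx[OF assms]) (simp add: inner_diff_right inner_diff_left inner_commute e0_inner algebra_simps power2_eq_square)
  finally show ?case .
qed

lemma SL1:
  assumes "even n" "n > 0" "m \<ge> 1"
  shows "measure_pmf.expectation (est n gg m w) (\<lambda>G. v \<bullet> (w - \<gamma> *\<^sub>R G)) = (1 - \<gamma>) * (v \<bullet> (w::'a::euclidean_space))"
proof -
  have "measure_pmf.expectation (est n gg m w) (\<lambda>G. v \<bullet> (w - \<gamma> *\<^sub>R G))
     = measure_pmf.expectation (est_sum n gg m w) (\<lambda>S. v \<bullet> w + (- \<gamma> / real m) * (v \<bullet> S) + 0 * (v \<bullet> S))"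
    unfolding est_def by (simp add: inner_diff_right)
  also have "\<dots> = (1 - \<gamma>) * (v \<bullet> w)"
    by (subst E_lin) (use assms in \<open>simp_all add: fin_est_sum L1 algebra_simps\<close>)
  finally show ?thesis .
qed

lemma SL2:
  assumes "even n" "n > 0" "m \<ge> 1"
  shows "measure_pmf.expectation (est n gg m w) (\<lambda>G. (w - \<gamma> *\<^sub>R G) \<bullet> (w - \<gamma> *\<^sub>R G))
     = (1 - \<gamma>)^2 * (w \<bullet> (w::'a::euclidean_space)) + \<gamma>^2 / real m"
proof -
  have "measure_pmf.expectation (est n gg m w) (\<lambda>G. (w - \<gamma> *\<^sub>R G) \<bullet> (w - \<gamma> *\<^sub>R G))
     = measure_pmf.expectation (est_sum n gg m w) (\<lambda>S. w \<bullet> w + (- 2 * \<gamma> / real m) * (w \<bullet> S) + (\<gamma> / real m)^2 * (S \<bullet> S))"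
    unfolding est_def by (simp add: inner_diff_right inner_diff_left inner_commute algebra_simps power2_eq_square)
  also have "\<dots> = (1 - \<gamma>)^2 * (w \<bullet> w) + \<gamma>^2 / real m"
    by (subst E_lin) (use assms in \<open>simp_all add: fin_est_sum L1 L2 field_simps power2_eq_square\<close>)
  finally show ?thesis .
qed

lemma fin_sgd: "n > 0 \<Longrightarrow> finite (set_pmf (sgd n gg m \<gamma> w0 k))"
  by (induction k) (auto simp: fin_est)

lemma E_sgd_step:
  fixes h :: "'a::euclidean_space \<Rightarrow> real"
  assumes "n > 0"
  shows "measure_pmf.expectation (sgd n gg m \<gamma> w0 (Suc k)) h =
    measure_pmf.expectation (sgd n gg m \<gamma> w0 k) (\<lambda>w. measure_pmf.expectation (est n gg m w) (\<lambda>G. h (w - \<gamma> *\<^sub>R G)))"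
  unfolding sgd.simps by (subst E_bind) (auto simp: fin_sgd fin_est assms)

lemma sgd_mean:
  assumes "even n" "n > 0" "m \<ge> 1"
  shows "measure_pmf.expectation (sgd n gg m \<gamma> w0 k) (\<lambda>w. v \<bullet> w) = (1 - \<gamma>)^k * (v \<bullet> (w0::'a::euclidean_space))"
proof (induction k)
  case 0 then show ?case by simp
next
  case (Suc k)
  show ?case using Suc by (subst E_sgd_step[OF assms(2)]) (simp only: SL1[OF assms], simp)
qed

lemma sgd_sq:
  assumes "even n" "n > 0" "m \<ge> 1"
  shows "measure_pmf.expectation (sgd n gg m \<gamma> w0 (Suc k)) (\<lambda>w. w \<bullet> w) =
     (1 - \<gamma>)^2 * measure_pmf.expectation (sgd n gg m \<gamma> w0 k) (\<lambda>w. w \<bullet> (w::'a::euclidean_space)) + \<gamma>^2 / real m"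
proof -
  have "measure_pmf.expectation (sgd n gg m \<gamma> w0 (Suc k)) (\<lambda>w. w \<bullet> w) =
      measure_pmf.expectation (sgd n gg m \<gamma> w0 k) (\<lambda>w. \<gamma>^2 / real m + (1 - \<gamma>)^2 * (w \<bullet> w) + 0 * (w \<bullet> w))"
    by (subst E_sgd_step[OF assms(2)]) (simp only: SL2[OF assms], simp add: add.commute)
  also have "\<dots> = (1 - \<gamma>)^2 * measure_pmf.expectation (sgd n gg m \<gamma> w0 k) (\<lambda>w. w \<bullet> w) + \<gamma>^2 / real m"
    by (subst E_lin) (simp_all add: fin_sgd assms)
  finally show ?thesis .
qed

primrec alph :: "real \<Rightarrow> nat \<Rightarrow> real" where
  "alph \<eta> 0 = 0"
| "alph \<eta> (Suc t) = alph \<eta> t + \<eta> * (1 - alph \<eta> t)"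

lemma inner_closed:
  "svrg_inner n gg \<eta> wt mu t =
     return_pmf (wt - alph \<eta> t *\<^sub>R mu, real t *\<^sub>R wt - (\<Sum>j<t. alph \<eta> (Suc j)) *\<^sub>R (mu::'a::euclidean_space))"
proof (induction t)
  case 0 then show ?case by simp
next
  case (Suc t)
  show ?case
    by (simp only: svrg_inner.simps Suc bind_return_pmf) (simp add: gg_def Let_def algebra_simps)
qed

definition gam :: "real \<Rightarrow> nat \<Rightarrow> real" where
  "gam \<eta> T = (\<Sum>j<T. alph \<eta> (Suc j)) / real T"

lemma epoch_eq:
  assumes "T \<ge> 1"
  shows "svrg_epoch n gg m \<eta> T wt = map_pmf (\<lambda>G. wt - gam \<eta> T *\<^sub>R G) (est n gg m (wt::'a::euclidean_space))"
  using assms unfolding svrg_epoch_def map_pmf_def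
  by (simp add: inner_closed bind_return_pmf gam_def algebra_simps)

lemma svrg_eq:
  fixes w0 :: "'a::euclidean_space"
  assumes "T \<ge> 1"
  shows "svrg n gg m \<eta> T w0 S = sgd n gg m (gam \<eta> T) w0 (S::nat)"
proof -
  have e: "svrg_epoch n gg m \<eta> T = (\<lambda>wt. map_pmf (\<lambda>G. wt - gam \<eta> T *\<^sub>R G) (est n gg m (wt::'a::euclidean_space)))"
    by (intro ext) (rule epoch_eq[OF assms])
  show ?thesis by (induction S) (simp_all add: e)
qed

definition ff :: "nat \<Rightarrow> 'a::euclidean_space \<Rightarrow> real" where
  "ff i w = ((w - av i) \<bullet> (w - av i)) / 2"

lemma sq_add:
  fixes x d :: "'a::euclidean_space"
  shows "(x + d) \<bullet> (x + d) = x \<bullet> x + 2 * (x \<bullet> d) + d \<bullet> d"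
  by (simp add: inner_add_left inner_add_right inner_commute)

lemma quad_id:
  fixes u w a :: "'a::euclidean_space"
  shows "((u - a) \<bullet> (u - a)) / 2 = ((w - a) \<bullet> (w - a)) / 2 + (w - a) \<bullet> (u - w) + 1 / 2 * (norm (u - w))\<^sup>2"
proof -
  have e: "(w - a) + (u - w) = u - a" by simp
  show ?thesis using sq_add[of "w - a" "u - w"] unfolding e by (simp add: power2_norm_eq_inner)
qed

lemma ff_eq: "ff i u = ff i w + gg i w \<bullet> (u - w) + 1 / 2 * (norm (u - (w::'a::euclidean_space)))\<^sup>2"
  unfolding ff_def gg_def by (rule quad_id)

lemma ff_deriv: "(ff i has_derivative (\<lambda>h. gg i w \<bullet> h)) (at (w::'a::euclidean_space))"
proof -
  have "((\<lambda>w. (w - av i) \<bullet> (w - av i)) has_derivative (\<lambda>h. (w - av i) \<bullet> (h - 0) + (h - 0) \<bullet> (w - av i))) (at w)"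
    by (intro has_derivative_inner has_derivative_diff has_derivative_ident has_derivative_const)
  then have D: "((\<lambda>w. (1/2) * ((w - av i) \<bullet> (w - av i))) has_derivative (\<lambda>h. (1/2) * ((w - av i) \<bullet> (h - 0) + (h - 0) \<bullet> (w - av i)))) (at w)"
    by (rule has_derivative_mult_right)
  have Q: "(\<lambda>h. (1/2) * ((w - av i) \<bullet> (h - 0) + (h - 0) \<bullet> (w - av i))) = (\<lambda>h. gg i w \<bullet> h)"
    by (auto simp: gg_def inner_commute)
  have E: "ff i = (\<lambda>w. (1/2) * ((w - av i) \<bullet> (w - av i)))"
    by (auto simp: ff_def)
  show ?thesis unfolding E using D unfolding Q .
qed

lemma in_Sigma_ff: "n > 0 \<Longrightarrow> in_Sigma 1 1 n (ff :: nat \<Rightarrow> 'a::euclidean_space \<Rightarrow> real) gg"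
  unfolding in_Sigma_def using ff_deriv ff_eq by (metis order_refl)

lemma Fsum_ff:
  assumes "even n" "n > 0"
  shows "Fsum n ff w = (w \<bullet> w + 1) / 2"
proof -
  have "(\<Sum>i<n. ff i w) = real (n div 2) * ((\<lambda>a. ((w - a) \<bullet> (w - a)) / 2) e0 + (\<lambda>a. ((w - a) \<bullet> (w - a)) / 2) (- e0))"
    unfolding ff_def by (rule sum_av[OF assms(1)])
  also have "\<dots> = real (n div 2) * (w \<bullet> w + 1)"
    by (simp add: inner_diff_left inner_diff_right inner_add_left inner_add_right inner_commute e0_inner field_simps)
  finally show ?thesis using assms unfolding Fsum_def by (auto simp: real_of_nat_div field_simps)
qed

lemma gap_ff:
  assumes "even n" "n > 0"
  shows "gap n ff = (\<lambda>w::'a::euclidean_space. (w \<bullet> w) / 2)"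
proof -
  have "(INF v. Fsum n ff (v::'a)) = 1/2"
    unfolding Fsum_ff[OF assms]
    by (rule cInf_eq_minimum[where z="1/2"]) (auto intro!: image_eqI[where x=0])
  then show ?thesis by (auto simp: gap_def Fsum_ff[OF assms] field_simps)
qed

lemma step_arith:
  fixes x m k \<gamma> :: real
  assumes x: "x > 0" and m: "m \<ge> 1" and h: "x * (1 + k * m) \<ge> 1" and k: "k \<ge> 0"
  shows "((1 - \<gamma>)^2 * x + \<gamma>^2 / m) * (1 + (k + 1) * m) \<ge> 1"
proof -
  define y where "y = (1 - \<gamma>)^2 * x + \<gamma>^2 / m"
  have y0: "y \<ge> 0" unfolding y_def using x m by simp
  have "m * (y * (1 + m * x) - x) = ((1 - \<gamma>) * m * x - \<gamma>)^2"
    unfolding y_def using m by (simp add: field_simps power2_eq_square)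
  then have "m * (y * (1 + m * x) - x) \<ge> 0" by simp
  then have A: "y * (1 + m * x) \<ge> x" using m by (simp add: zero_le_mult_iff)
  have "1 + m * x \<le> x * (1 + (k + 1) * m)" using h by (simp add: algebra_simps)
  then have "y * (1 + m * x) \<le> y * (x * (1 + (k + 1) * m))" using y0 by (rule mult_left_mono)
  with A have "x * 1 \<le> x * (y * (1 + (k + 1) * m))" by (simp add: algebra_simps)
  then have "1 \<le> y * (1 + (k + 1) * m)" using x by simp
  then show ?thesis unfolding y_def .
qed

lemma Vbound:
  fixes e :: "'a::euclidean_space"
  assumes "even n" "n > 0" "m \<ge> 1" and ee: "e \<bullet> e = 1"
  shows "measure_pmf.expectation (sgd n gg m \<gamma> e k) (\<lambda>w. w \<bullet> w) * (1 + real k * real m) \<ge> 1"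
proof (induction k)
  case 0 then show ?case by (simp add: ee)
next
  case (Suc k)
  let ?x = "measure_pmf.expectation (sgd n gg m \<gamma> e k) (\<lambda>w. w \<bullet> w)"
  have x0: "?x \<ge> 0" by (rule Bochner_Integration.integral_nonneg) simp
  have "?x > 0"
  proof (rule ccontr)
    assume "\<not> ?x > 0" then have "?x = 0" using x0 by simp
    with Suc show False by simp
  qed
  have eq: "measure_pmf.expectation (sgd n gg m \<gamma> e (Suc k)) (\<lambda>w. w \<bullet> w) = (1 - \<gamma>)^2 * ?x + \<gamma>^2 / real m"
    by (rule sgd_sq[OF assms(1-3)])
  from step_arith[OF \<open>?x > 0\<close> _ Suc, of \<gamma>] assms show ?case
    unfolding eq by (simp add: algebra_simps)
qed

lemma pow_bound:
  fixes x :: real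
  assumes "x \<ge> 0"
  shows "(1 + x)^k * (1 - real k * x) \<le> 1"
proof (induction k)
  case 0 then show ?case by simp
next
  case (Suc k)
  have p: "(1 + x)^k \<ge> 0" using assms by simp
  have "(1 + x)^(Suc k) * (1 - real (Suc k) * x) = (1 + x)^k * ((1 - real k * x) - (real k + 1) * x^2)"
    by (simp add: algebra_simps power2_eq_square)
  also have "\<dots> \<le> (1 + x)^k * (1 - real k * x)"
    using p by (intro mult_left_mono) auto
  also have "\<dots> \<le> 1" by (rule Suc)
  finally show ?case .
qed

lemma sgd_cent:
  fixes e :: "'a::euclidean_space"
  assumes "even n" "n > 0" "m \<ge> 1" and ee: "e \<bullet> e = 1"
  shows "measure_pmf.expectation (sgd n gg m \<gamma> e k)
      (\<lambda>w. (w - (1 - \<gamma>)^k *\<^sub>R e) \<bullet> (w - (1 - \<gamma>)^k *\<^sub>R e))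
    = measure_pmf.expectation (sgd n gg m \<gamma> e k) (\<lambda>w. w \<bullet> w) - ((1 - \<gamma>)^k)^2"
proof -
  let ?M = "(1 - \<gamma>)^k *\<^sub>R e"
  have "measure_pmf.expectation (sgd n gg m \<gamma> e k) (\<lambda>w. (w - ?M) \<bullet> (w - ?M))
     = measure_pmf.expectation (sgd n gg m \<gamma> e k) (\<lambda>w. ?M \<bullet> ?M + (-2) * (?M \<bullet> w) + 1 * (w \<bullet> w))"
    by (rule Bochner_Integration.integral_cong[OF refl]) (simp add: inner_diff_left inner_diff_right inner_commute)
  also have "\<dots> = ?M \<bullet> ?M + (-2) * measure_pmf.expectation (sgd n gg m \<gamma> e k) (\<lambda>w. ?M \<bullet> w) + 1 * measure_pmf.expectation (sgd n gg m \<gamma> e k) (\<lambda>w. w \<bullet> w)"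
    by (rule E_lin[OF fin_sgd[OF assms(2)], where a="?M \<bullet> ?M" and b="-2" and f="\<lambda>w. ?M \<bullet> w" and c=1 and g="\<lambda>w. w \<bullet> w"])
  also have "\<dots> = measure_pmf.expectation (sgd n gg m \<gamma> e k) (\<lambda>w. w \<bullet> w) - ((1 - \<gamma>)^k)^2"
    by (simp add: sgd_mean[OF assms(1-3)] ee power2_eq_square)
  finally show ?thesis .
qed

lemma Ubound:
  fixes e :: "'a::euclidean_space"
  assumes "even n" "n > 0" "m \<ge> 1" and ee: "e \<bullet> e = 1"
  shows "measure_pmf.expectation (sgd n gg m \<gamma> e k) (\<lambda>w. w \<bullet> w) - ((1 - \<gamma>)^k)^2
     \<le> \<gamma>^2 * real k / real m * (1 + \<bar>\<gamma>\<bar>)^(2*k)"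
proof (induction k)
  case 0 then show ?case by (simp add: ee)
next
  case (Suc k)
  let ?x = "measure_pmf.expectation (sgd n gg m \<gamma> e k) (\<lambda>w. w \<bullet> w)"
  let ?B = "\<gamma>^2 * real k / real m * (1 + \<bar>\<gamma>\<bar>)^(2*k)"
  have B0: "?B \<ge> 0" by simp
  have eq: "measure_pmf.expectation (sgd n gg m \<gamma> e (Suc k)) (\<lambda>w. w \<bullet> w) = (1 - \<gamma>)^2 * ?x + \<gamma>^2 / real m"
    by (rule sgd_sq[OF assms(1-3)])
  have a: "\<bar>1 - \<gamma>\<bar> \<le> 1 + \<bar>\<gamma>\<bar>" by (auto simp: abs_if)
  have sq: "(1 - \<gamma>)^2 \<le> (1 + \<bar>\<gamma>\<bar>)^2"
    using power_mono[OF a, of 2] by simp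
  have "measure_pmf.expectation (sgd n gg m \<gamma> e (Suc k)) (\<lambda>w. w \<bullet> w) - ((1 - \<gamma>)^(Suc k))^2
      = (1 - \<gamma>)^2 * (?x - ((1 - \<gamma>)^k)^2) + \<gamma>^2 / real m"
    unfolding eq by (simp add: algebra_simps power_mult_distrib power2_eq_square)
  also have "\<dots> \<le> (1 - \<gamma>)^2 * ?B + \<gamma>^2 / real m"
    using Suc by (intro add_right_mono mult_left_mono) auto
  also have "\<dots> \<le> (1 + \<bar>\<gamma>\<bar>)^2 * ?B + \<gamma>^2 / real m * (1 + \<bar>\<gamma>\<bar>)^(2*Suc k)"
  proof (intro add_mono mult_right_mono sq B0)
    have o: "1 \<le> (1 + \<bar>\<gamma>\<bar>)^(2*Suc k)" by (rule one_le_power) simp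
    have g0: "\<gamma>^2 / real m \<ge> 0" by simp
    show "\<gamma>^2 / real m \<le> \<gamma>^2 / real m * (1 + \<bar>\<gamma>\<bar>)^(2*Suc k)"
      using mult_left_mono[OF o g0] by simp
  qed
  also have "\<dots> = \<gamma>^2 * real (Suc k) / real m * (1 + \<bar>\<gamma>\<bar>)^(2*Suc k)"
  proof -
    have p: "(1 + \<bar>\<gamma>\<bar>)^(2*Suc k) = (1 + \<bar>\<gamma>\<bar>)^2 * (1 + \<bar>\<gamma>\<bar>)^(2*k)"
      by (simp add: power_add[symmetric])
    have gen: "\<And>A B g k mm :: real. A * (g * k / mm * B) + g / mm * (A * B) = g * (k + 1) / mm * (A * B)"
      by (simp add: algebra_simps add_divide_distrib)
    show ?thesis unfolding p using gen by simp
  qed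
  finally show ?case .
qed

lemma norm_e0: "norm (e0::'a::euclidean_space) = 1"
  by (simp add: norm_eq_sqrt_inner e0_inner)

lemma prob_E: "measure_pmf.prob M A = measure_pmf.expectation M (indicator A :: _ \<Rightarrow> real)"
  by simp

lemma lastA:
  fixes w :: "'a::euclidean_space"
  assumes ev: "even n" "n > 0" and m1: "m \<ge> 1" and r0: "r \<ge> 0" and big: "\<bar>\<gamma>\<bar> > r * real m"
  shows "measure_pmf.prob (est n gg m w) {G. norm (w - \<gamma> *\<^sub>R G) \<le> r} \<le> 1/2"
proof -
  obtain m' where m: "m = Suc m'" using m1 by (cases m) auto
  define A where "A = {G. norm (w - \<gamma> *\<^sub>R G) \<le> r}"
  define \<phi> where "\<phi> = (\<lambda>a. measure_pmf.expectation (est_sum n gg m' w)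
       (\<lambda>s. indicator A ((1 / real m) *\<^sub>R (w - a + s)) :: real))"
  have "measure_pmf.prob (est n gg m w) A = measure_pmf.expectation (est n gg m w) (indicator A)"
    by (rule prob_E)
  also have "\<dots> = measure_pmf.expectation (est_sum n gg (Suc m') w) (\<lambda>S. indicator A ((1 / real m) *\<^sub>R S))"
    by (simp only: est_def integral_map_pmf m)
  also have "\<dots> = measure_pmf.expectation (idx n) (\<lambda>i. measure_pmf.expectation
       (map_pmf (\<lambda>s. gg i w + s) (est_sum n gg m' w)) (\<lambda>S. indicator A ((1 / real m) *\<^sub>R S)))"
    by (simp only: est_sum.simps, rule E_bind) (auto simp: set_idx fin_est_sum ev)
  also have "\<dots> = measure_pmf.expectation (idx n) (\<lambda>i. \<phi> (av i))"
    by (simp add: \<phi>_def gg_def)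
  also have "\<dots> = (\<phi> e0 + \<phi> (- e0)) / 2"
    by (rule E_idx[OF ev])
  also have "\<dots> \<le> 1 / 2"
  proof -
    have fin: "finite (set_pmf (est_sum n gg m' w))" using fin_est_sum ev by auto
    have "\<phi> e0 + \<phi> (- e0) = measure_pmf.expectation (est_sum n gg m' w)
       (\<lambda>s. indicator A ((1 / real m) *\<^sub>R (w - e0 + s)) + indicator A ((1 / real m) *\<^sub>R (w - - e0 + s)) :: real)"
      unfolding \<phi>_def by (rule E_add[OF fin, symmetric])
    also have "\<dots> \<le> measure_pmf.expectation (est_sum n gg m' w) (\<lambda>s. 1 :: real)"
    proof (rule integral_mono)
      show "integrable (measure_pmf (est_sum n gg m' w))
        (\<lambda>s. indicator A ((1 / real m) *\<^sub>R (w - e0 + s)) + indicator A ((1 / real m) *\<^sub>R (w - - e0 + s)) :: real)"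
        using fin by (rule integrable_measure_pmf_finite)
      show "integrable (measure_pmf (est_sum n gg m' w)) (\<lambda>s. 1 :: real)" by simp
      fix s :: 'a
      let ?x1 = "(1 / real m) *\<^sub>R (w - e0 + s)" and ?x2 = "(1 / real m) *\<^sub>R (w - - e0 + s)"
      have "\<not> (?x1 \<in> A \<and> ?x2 \<in> A)"
      proof
        assume "?x1 \<in> A \<and> ?x2 \<in> A"
        then have n1: "norm (w - \<gamma> *\<^sub>R ?x1) \<le> r" and n2: "norm (w - \<gamma> *\<^sub>R ?x2) \<le> r"
          unfolding A_def by auto
        have d1: "(w - - e0 + s) - (w - e0 + s) = 2 *\<^sub>R e0" by (simp add: scaleR_2 algebra_simps)
        have d: "(w - \<gamma> *\<^sub>R ?x1) - (w - \<gamma> *\<^sub>R ?x2) = (\<gamma> / real m * 2) *\<^sub>R e0"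
        proof -
          have "(w - \<gamma> *\<^sub>R ?x1) - (w - \<gamma> *\<^sub>R ?x2) = (\<gamma> / real m) *\<^sub>R ((w - - e0 + s) - (w - e0 + s))"
            by (simp only: scaleR_diff_right scaleR_scaleR) (simp add: algebra_simps)
          then show ?thesis unfolding d1 by simp
        qed
        have "norm ((w - \<gamma> *\<^sub>R ?x1) - (w - \<gamma> *\<^sub>R ?x2)) \<le> 2 * r"
          using norm_triangle_ineq4[of "w - \<gamma> *\<^sub>R ?x1" "w - \<gamma> *\<^sub>R ?x2"] n1 n2 by simp
        then have "\<bar>\<gamma>\<bar> / real m * 2 \<le> 2 * r" unfolding d using norm_e0[where 'a='a] by (simp add: abs_mult)
        then have "\<bar>\<gamma>\<bar> \<le> r * real m" using m1 by (simp add: field_simps)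
        then show False using big by simp
      qed
      then show "indicator A ?x1 + indicator A ?x2 \<le> (1::real)"
        by (auto simp: indicator_def)
    qed
    also have "\<dots> = 1" by simp
    finally show ?thesis by simp
  qed
  finally show ?thesis unfolding A_def .
qed

lemma sgd_lastA:
  assumes ev: "even n" "n > 0" and m1: "m \<ge> 1" and r0: "r \<ge> 0" and big: "\<bar>\<gamma>\<bar> > r * real m"
  shows "measure_pmf.prob (sgd n gg m \<gamma> (w0::'a::euclidean_space) (Suc k)) {w. norm w \<le> r} \<le> 1/2"
proof -
  have "measure_pmf.prob (sgd n gg m \<gamma> w0 (Suc k)) {w. norm w \<le> r}
      = measure_pmf.expectation (sgd n gg m \<gamma> w0 (Suc k)) (indicator {w. norm w \<le> r})"
    by (rule prob_E)
  also have "\<dots> = measure_pmf.expectation (sgd n gg m \<gamma> w0 k)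
      (\<lambda>w. measure_pmf.expectation (est n gg m w) (\<lambda>G. indicator {w. norm w \<le> r} (w - \<gamma> *\<^sub>R G)))"
    by (rule E_sgd_step[OF ev(2)])
  also have "\<dots> = measure_pmf.expectation (sgd n gg m \<gamma> w0 k)
      (\<lambda>w. measure_pmf.prob (est n gg m w) {G. norm (w - \<gamma> *\<^sub>R G) \<le> r})"
  proof (rule Bochner_Integration.integral_cong[OF refl])
    fix w :: 'a
    have "(\<lambda>G. indicator {w. norm w \<le> r} (w - \<gamma> *\<^sub>R G) :: real) = indicator {G. norm (w - \<gamma> *\<^sub>R G) \<le> r}"
      by (auto simp: indicator_def)
    then show "measure_pmf.expectation (est n gg m w) (\<lambda>G. indicator {w. norm w \<le> r} (w - \<gamma> *\<^sub>R G))
      = measure_pmf.prob (est n gg m w) {G. norm (w - \<gamma> *\<^sub>R G) \<le> r}"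
      by (simp only: prob_E)
  qed
  also have "\<dots> \<le> measure_pmf.expectation (sgd n gg m \<gamma> w0 k) (\<lambda>w. 1/2)"
    by (rule integral_mono[OF integrable_measure_pmf_finite[OF fin_sgd[OF ev(2)]]
          integrable_measure_pmf_finite[OF fin_sgd[OF ev(2)]] lastA[OF ev m1 r0 big]])
  also have "\<dots> = 1/2" by simp
  finally show ?thesis .
qed

lemma cheb:
  fixes M :: "'a::euclidean_space"
  assumes n0: "n > 0" and t0: "t > 0" and tM: "norm M - r \<ge> t"
  shows "measure_pmf.prob (sgd n gg m \<gamma> w0 k) {w. norm w \<le> r}
     \<le> measure_pmf.expectation (sgd n gg m \<gamma> w0 k) (\<lambda>w. (w - M) \<bullet> (w - M)) / t^2"
proof -
  let ?p = "sgd n gg m \<gamma> w0 k"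
  have "measure_pmf.prob ?p {w. norm w \<le> r} \<le> measure_pmf.prob ?p {w \<in> space (measure_pmf ?p). t^2 \<le> (w - M) \<bullet> (w - M)}"
  proof (rule measure_pmf.finite_measure_mono)
    show "{w. norm w \<le> r} \<subseteq> {w \<in> space (measure_pmf ?p). t^2 \<le> (w - M) \<bullet> (w - M)}"
    proof
      fix w :: 'a assume "w \<in> {w. norm w \<le> r}"
      then have "norm w \<le> r" by simp
      then have "t \<le> norm (w - M)" using tM norm_triangle_ineq2[of M w] by (simp add: norm_minus_commute)
      then have "t^2 \<le> (norm (w - M))^2" using t0 by (intro power_mono) auto
      then show "w \<in> {w \<in> space (measure_pmf ?p). t^2 \<le> (w - M) \<bullet> (w - M)}"
        by (simp add: power2_norm_eq_inner)
    qed
  qed simp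
  also have "\<dots> \<le> measure_pmf.expectation ?p (\<lambda>w. (w - M) \<bullet> (w - M)) / t^2"
    by (rule integral_Markov_inequality_measure[where A=UNIV])
       (use t0 in \<open>auto intro!: integrable_measure_pmf_finite fin_sgd n0\<close>)
  finally show ?thesis .
qed

lemma partA_sgd:
  assumes ev: "even n" "n > 0" and m1: "m \<ge> 1" and e: "0 < \<epsilon>" "\<epsilon> \<le> 1/4"
    and E: "measure_pmf.expectation (sgd n gg m \<gamma> (e0::'a::euclidean_space) k) (gap n ff) \<le> \<epsilon>"
  shows "real (k * m) \<ge> (1/4) / \<epsilon>"
proof -
  define V where "V = measure_pmf.expectation (sgd n gg m \<gamma> (e0::'a) k) (\<lambda>w. w \<bullet> w)"
  have "measure_pmf.expectation (sgd n gg m \<gamma> (e0::'a) k) (gap n ff) = V / 2"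
    unfolding V_def gap_ff[OF ev] by simp
  with E have V2: "V \<le> 2 * \<epsilon>" by simp
  have V1: "V * (1 + real k * real m) \<ge> 1"
    unfolding V_def by (rule Vbound[OF ev m1 e0_inner])
  have K0: "real k * real m \<ge> 0" by simp
  have "1 \<le> 2 * \<epsilon> * (1 + real k * real m)"
    using V1 mult_right_mono[OF V2, of "1 + real k * real m"] K0 by linarith
  then have "\<epsilon> * (real k * real m) \<ge> 1/4" using e by (simp add: algebra_simps)
  moreover have "(1/4)/\<epsilon> \<le> real k * real m \<longleftrightarrow> 1/4 \<le> real k * real m * \<epsilon>"
    using e by (simp add: pos_divide_le_eq algebra_simps)
  ultimately show ?thesis by (simp add: mult.commute)
qed

lemma partB_sgd:
  assumes ev: "even n" "n > 0" and m1: "m \<ge> 1" and e: "0 < \<epsilon>" "\<epsilon> < 1/10000"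
    and P: "measure_pmf.prob (sgd n gg m \<gamma> (e0::'a::euclidean_space) k) {w. gap n ff w \<le> \<epsilon>} > 3/4"
  shows "real (k * m) \<ge> (1/8) / sqrt \<epsilon>"
proof (rule ccontr)
  assume "\<not> ?thesis"
  then have km: "real k * real m < (1/8) / sqrt \<epsilon>" by simp
  define r where "r = sqrt (2 * \<epsilon>)"
  have r0: "r \<ge> 0" unfolding r_def using e by simp
  have rr: "r * r = 2 * \<epsilon>" unfolding r_def using e by simp
  have r64: "r < 1/64"
  proof (rule ccontr)
    assume "\<not> r < 1/64"
    then have "r \<ge> 1/64" by simp
    then have "r * r \<ge> (1/64) * (1/64)" using mult_mono[of "1/64" r "1/64" r] by simp
    then show False using rr e by simp
  qed
  have set_eq: "{w. gap n ff w \<le> \<epsilon>} = {w::'a. norm w \<le> r}"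
    unfolding r_def gap_ff[OF ev] by (auto simp: norm_eq_sqrt_inner)
  have P': "measure_pmf.prob (sgd n gg m \<gamma> (e0::'a) k) {w. norm w \<le> r} > 3/4"
    using P unfolding set_eq .
  show False
  proof (cases k)
    case 0
    have "norm (e0::'a) > r" using norm_e0[where 'a='a] r64 by simp
    then have "measure_pmf.prob (sgd n gg m \<gamma> (e0::'a) k) {w. norm w \<le> r} = 0"
      using 0 by simp
    then show False using P' by simp
  next
    case (Suc k')
    show False
    proof (cases "\<bar>\<gamma>\<bar> > r * real m")
      case True
      have "measure_pmf.prob (sgd n gg m \<gamma> (e0::'a) (Suc k')) {w. norm w \<le> r} \<le> 1/2"
        by (rule sgd_lastA[OF ev m1 r0 True])
      then show False using P' Suc by simp
    next
      case False
      then have gm: "\<bar>\<gamma>\<bar> \<le> r * real m" by simp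
      have se: "sqrt \<epsilon> > 0" using e by simp
      have rs: "r = sqrt 2 * sqrt \<epsilon>" unfolding r_def by (simp add: real_sqrt_mult)
      have s2: "sqrt 2 \<le> 2"
      proof (rule ccontr)
        assume "\<not> sqrt 2 \<le> 2"
        then have "2 < sqrt 2" by simp
        then have "2 * 2 < sqrt 2 * sqrt (2::real)" using mult_strict_mono[of 2 "sqrt 2" 2 "sqrt 2"] by auto
        then show False by simp
      qed
      have "real k * real m * sqrt \<epsilon> < 1/8" using km se by (simp add: field_simps)
      then have "sqrt 2 * (real k * real m * sqrt \<epsilon>) \<le> sqrt 2 * (1/8)"
        by (intro mult_left_mono) auto
      also have "\<dots> \<le> 2 * (1/8)" using s2 by simp
      finally have krm: "real k * r * real m \<le> 1/4" unfolding rs by (simp add: algebra_simps)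
      have kg: "real k * \<bar>\<gamma>\<bar> \<le> 1/4"
        using mult_left_mono[OF gm, of "real k"] krm by (simp add: algebra_simps)
      have k1: "real k \<ge> 1" using Suc by simp
      have g14: "\<bar>\<gamma>\<bar> \<le> 1/4"
        using kg k1 mult_right_mono[OF k1, of "\<bar>\<gamma>\<bar>"] by simp
      have pb: "(1 + \<bar>\<gamma>\<bar>)^k * (1 - real k * \<bar>\<gamma>\<bar>) \<le> 1" by (rule pow_bound) simp
      have pk0: "(1 + \<bar>\<gamma>\<bar>)^k \<ge> 0" by simp
      have h34: "(1 + \<bar>\<gamma>\<bar>)^k * (3/4) \<le> (1 + \<bar>\<gamma>\<bar>)^k * (1 - real k * \<bar>\<gamma>\<bar>)"
        using kg pk0 by (intro mult_left_mono) auto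
      have pk: "(1 + \<bar>\<gamma>\<bar>)^k \<le> 2" using pb h34 by linarith
      have p2k: "(1 + \<bar>\<gamma>\<bar>)^(2*k) \<le> 4"
      proof -
        have "(1 + \<bar>\<gamma>\<bar>)^(2*k) = ((1 + \<bar>\<gamma>\<bar>)^k)^2" by (simp add: power_mult[symmetric] mult.commute)
        also have "\<dots> \<le> 2^2" using pk pk0 by (intro power_mono) auto
        finally show ?thesis by simp
      qed
      define U where "U = measure_pmf.expectation (sgd n gg m \<gamma> (e0::'a) k) (\<lambda>w. w \<bullet> w) - ((1 - \<gamma>)^k)^2"
      have U1: "U \<le> \<gamma>^2 * real k / real m * (1 + \<bar>\<gamma>\<bar>)^(2*k)"
        unfolding U_def by (rule Ubound[OF ev m1 e0_inner])
      have gk0: "\<gamma>^2 * real k / real m \<ge> 0" by simp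
      have U2: "U \<le> \<gamma>^2 * real k / real m * 4"
        using U1 mult_left_mono[OF p2k gk0] by linarith
      have m0: "real m > 0" using m1 by simp
      have "\<gamma>^2 * real k / real m = \<bar>\<gamma>\<bar> * (real k * \<bar>\<gamma>\<bar>) / real m"
        by (simp add: power2_eq_square abs_mult_self_eq algebra_simps)
      also have "\<dots> \<le> (r * real m) * (1/4) / real m"
        using gm kg m0 by (intro divide_right_mono mult_mono) auto
      also have "\<dots> = r / 4" using m0 by simp
      finally have X: "\<gamma>^2 * real k / real m \<le> r / 4" .
      have "\<gamma>^2 * real k / real m * 4 \<le> r / 4 * 4" using X by (rule mult_right_mono) simp
      then have U3: "U \<le> r" using U2 by simp
      have g1: "-1 \<le> - \<gamma>" using g14 by simp
      have bern: "1 + real k * (- \<gamma>) \<le> (1 + (- \<gamma>))^k" by (rule Bernoulli_inequality[OF g1])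
      have "real k * \<gamma> \<le> 1/4" using kg abs_ge_self[of \<gamma>] k1
        by (smt (verit) mult_left_mono of_nat_0_le_iff)
      then have "(1 - \<gamma>)^k \<ge> 3/4" using bern by simp
      then have nM: "norm ((1 - \<gamma>)^k *\<^sub>R (e0::'a)) \<ge> 3/4"
        using norm_e0[where 'a='a] by simp
      have tM: "norm ((1 - \<gamma>)^k *\<^sub>R (e0::'a)) - r \<ge> 1/2" using nM r64 by simp
      have "measure_pmf.prob (sgd n gg m \<gamma> (e0::'a) k) {w. norm w \<le> r}
          \<le> measure_pmf.expectation (sgd n gg m \<gamma> (e0::'a) k)
               (\<lambda>w. (w - (1 - \<gamma>)^k *\<^sub>R e0) \<bullet> (w - (1 - \<gamma>)^k *\<^sub>R e0)) / (1/2)^2"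
        by (rule cheb[OF ev(2) _ tM]) simp
      also have "\<dots> = U * 4"
        unfolding U_def sgd_cent[OF ev m1 e0_inner] by (simp add: power2_eq_square)
      also have "\<dots> \<le> r * 4" using U3 by simp
      finally show False using P' r64 by simp
    qed
  qed
qed

lemma partA_svrg:
  assumes ev: "even n" "n > 0" and m1: "m \<ge> 1" and T1: "T \<ge> 1" and e: "0 < \<epsilon>" "\<epsilon> \<le> 1/4"
    and E: "measure_pmf.expectation (svrg n gg m \<eta> T (e0::'a::euclidean_space) S) (gap n ff) \<le> \<epsilon>"
  shows "real (S * (m + T)) \<ge> (1/4) / \<epsilon>"
proof -
  have "real (S * m) \<ge> (1/4) / \<epsilon>"
    by (rule partA_sgd[OF ev m1 e, where \<gamma>="gam \<eta> T"]) (use E in \<open>simp only: svrg_eq[OF T1]\<close>)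
  moreover have "real (S * m) \<le> real (S * (m + T))" by (simp only: of_nat_le_iff) simp
  ultimately show ?thesis by linarith
qed

lemma partB_svrg:
  assumes ev: "even n" "n > 0" and m1: "m \<ge> 1" and T1: "T \<ge> 1" and e: "0 < \<epsilon>" "\<epsilon> < 1/10000"
    and P: "measure_pmf.prob (svrg n gg m \<eta> T (e0::'a::euclidean_space) S) {w. gap n ff w \<le> \<epsilon>} > 3/4"
  shows "real (S * (m + T)) \<ge> (1/8) / sqrt \<epsilon>"
proof -
  have "real (S * m) \<ge> (1/8) / sqrt \<epsilon>"
    by (rule partB_sgd[OF ev m1 e, where \<gamma>="gam \<eta> T"]) (use P in \<open>simp only: svrg_eq[OF T1]\<close>)
  moreover have "real (S * m) \<le> real (S * (m + T))" by (simp only: of_nat_le_iff) simp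
  ultimately show ?thesis by linarith
qed

theorem theorem1:
  fixes n :: nat
  assumes "even n" and "n > 0"
  shows
   "(\<exists>(f :: nat \<Rightarrow> 'a::euclidean_space \<Rightarrow> real) g w0.
      in_Sigma 1 1 n f g \<and> gap n f w0 > 0 \<and>
      (\<exists>c > 0. \<exists>\<epsilon>0 > 0. \<forall>\<epsilon>. 0 < \<epsilon> \<and> \<epsilon> < \<epsilon>0 \<longrightarrow>
        (\<forall>m \<eta> k. m \<ge> 1 \<longrightarrow>
           measure_pmf.expectation (sgd n g m \<eta> w0 k) (gap n f) \<le> \<epsilon> \<longrightarrow>
           real (k * m) \<ge> c / \<epsilon>) \<and>
        (\<forall>m \<eta> T S. m \<ge> 1 \<longrightarrow> T \<ge> 1 \<longrightarrow>
           measure_pmf.expectation (svrg n g m \<eta> T w0 S) (gap n f) \<le> \<epsilon> \<longrightarrow>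
           real (S * (m + T)) \<ge> c / \<epsilon>)))
  \<and>
   (\<exists>(f :: nat \<Rightarrow> 'a::euclidean_space \<Rightarrow> real) g w0.
      in_Sigma 1 1 n f g \<and> gap n f w0 > 0 \<and>
      (\<exists>c > 0. \<exists>\<epsilon>0 > 0. \<exists>\<delta>0 > 0. \<forall>\<epsilon> \<delta>. 0 < \<epsilon> \<and> \<epsilon> < \<epsilon>0 \<and> 0 < \<delta> \<and> \<delta> < \<delta>0 \<longrightarrow>
        (\<forall>m \<eta> k. m \<ge> 2 \<longrightarrow>
           measure_pmf.prob (sgd n g m \<eta> w0 k) {w. gap n f w \<le> \<epsilon>} \<ge> 1 - \<delta> \<longrightarrow>
           real (k * m) \<ge> c / sqrt \<epsilon>) \<and>
        (\<forall>m \<eta> T S. m \<ge> 2 \<longrightarrow> T \<ge> 1 \<longrightarrow>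
           measure_pmf.prob (svrg n g m \<eta> T w0 S) {w. gap n f w \<le> \<epsilon>} \<ge> 1 - \<delta> \<longrightarrow>
           real (S * (m + T)) \<ge> c / sqrt \<epsilon>)))"
  apply (rule conjI)
  subgoal
    apply (rule exI[where x=ff], rule exI[where x=gg], rule exI[where x=e0])
    apply (intro conjI)
      apply (rule in_Sigma_ff[OF assms(2)])
     apply (simp add: gap_ff[OF assms] e0_inner)
    apply (rule exI[where x="1/4"], rule conjI, simp)
    apply (rule exI[where x="1/4"], rule conjI, simp)
    apply (intro allI impI conjI)
     apply (rule partA_sgd[OF assms]; auto)
    apply (rule partA_svrg[OF assms]; auto)
    done
  subgoal
    apply (rule exI[where x=ff], rule exI[where x=gg], rule exI[where x=e0])
    apply (intro conjI)
      apply (rule in_Sigma_ff[OF assms(2)])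
     apply (simp add: gap_ff[OF assms] e0_inner)
    apply (rule exI[where x="1/8"], rule conjI, simp)
    apply (rule exI[where x="1/10000"], rule conjI, simp)
    apply (rule exI[where x="1/4"], rule conjI, simp)
    apply (intro allI impI conjI)
    subgoal for \<epsilon> \<delta> m \<eta> k by (rule partB_sgd[OF assms, where \<gamma>=\<eta> and 'a='a]) auto
    subgoal for \<epsilon> \<delta> m \<eta> T S by (rule partB_svrg[OF assms, where \<eta>=\<eta> and T=T and 'a='a]) auto
    done
  done

end
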